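(* Fix integers $N\ge 1$, $M\ge 1$, $K\ge 1$, a wavelength $\lambda>0$, a reference path gain $\beta\in(0,1)$, and positive distances $d_{0,a_1}$, $d_{a_K,J+1}$ and $d_{a_k,a_{k+1}}$ ($k=1,\dots,K-1$). Consider a multi-hop reflection route from a base station (BS) with $N$ antennas through $K$ distinct intelligent reflecting surfaces (IRSs) $a_1,\dots,a_K$, each with $M$ reflecting elements, to a single-antenna user, with line-of-sight channels $$\mathbf H_{0,a_1}=\frac{\sqrt\beta}{d_{0,a_1}}e^{-\frac{j2\pi d_{0,a_1}}{\lambda}}\tilde{\mathbf h}_{a_1,2}\tilde{\mathbf h}_{a_1,1}^H\in\mathbb C^{M\times N},$$ $$\mathbf S_{a_k,a_{k+1}}=\frac{\sqrt\beta}{d_{a_k,a_{k+1}}}e^{-\frac{j2\pi d_{a_k,a_{k+1}}}{\lambda}}\tilde{\mathbf s}_{a_k,a_{k+1},2}\tilde{\mathbf s}_{a_k,a_{k+1},1}^H\in\mathbb C^{M\times M}\ (1\le k\le K-1),$$ $$\mathbf g_{a_K,J+1}^H=\frac{\sqrt\beta}{d_{a_K,J+1}}e^{-\frac{j2\pi d_{a_K,J+1}}{\lambda}}\tilde{\mathbf g}_{a_K,J+1}^H\in\mathbb C^{1\times M},$$ where $\tilde{\mathbf h}_{a_1,1}=\mathbf a_B(\vartheta_{0,a_1})$, and $\tilde{\mathbf h}_{a_1,2}$, $\tilde{\mathbf s}_{a_k,a_{k+1},1}$, $\tilde{\mathbf s}_{a_k,a_{k+1},2}$, $\tilde{\mathbf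 g}_{a_K,J+1}$ are IRS array responses $\mathbf a_I(\cdot,\cdot)$ at arbitrary angles (see context). For phase shifts $\theta_{a_k,m}\in\mathbb R$ let $\mathbf\Phi_{a_k}=\mathrm{diag}(e^{j\theta_{a_k,1}},\dots,e^{j\theta_{a_k,M}})$, and for a BS beamformer $\mathbf w_B\in\mathbb C^N$ with $\|\mathbf w_B\|=1$ define the end-to-end channel $$h_{0,J+1}=\mathbf g_{a_K,J+1}^H\mathbf\Phi_{a_K}\mathbf S_{a_{K-1},a_K}\mathbf\Phi_{a_{K-1}}\cdots\mathbf S_{a_1,a_2}\mathbf\Phi_{a_1}\mathbf H_{0,a_1}\mathbf w_B$$ (for $K=1$: $h_{0,J+1}=\mathbf g_{a_1,J+1}^H\mathbf\Phi_{a_1}\mathbf H_{0,a_1}\mathbf w_B$). Then the maximum of $|h_{0,J+1}|^2$ over all phase shifts $\{\theta_{a_k,m}\}$ and all unit-norm $\mathbf w_B$ equals $$M^{2K}N\kappa^2=\frac{M^{2K}N\beta^{K+1}}{d_{0,a_1}^2\,d_{a_K,J+1}^2\prod_{k=1}^{K-1}d_{a_k,a_{k+1}}^2},\qquad \kappa=\frac{(\sqrt\beta)^{K+1}}{d_{0,a_1}d_{a_K,J+1}\prod_{k=1}^{K-1}d_{a_k,a_{k+1}}},$$ and it is attained by $\mathbf w_B=e^{\frac{j2\pi D}{\lambda}}\tilde{\mathbf h}_{a_1,1}/\|\tilde{\mathbf h}_{a_1,1}\|$ with $D=d_{0,a_1}+d_{a_K,J+1}+\sum_{k=1}^{K-1}d_{a_k,a_{k+1}}$,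 and, for each $m\in\{1,\dots,M\}$, $\theta_{a_k,m}=\angle(\mathbf y_k)_m-\angle(\mathbf x_k)_m$, where the incoming vector is $\mathbf x_1=\tilde{\mathbf h}_{a_1,2}$ and $\mathbf x_k=\tilde{\mathbf s}_{a_{k-1},a_k,2}$ for $k\ge2$, and the outgoing vector is $\mathbf y_k=\tilde{\mathbf s}_{a_k,a_{k+1},1}$ for $k\le K-1$ and $\mathbf y_K=\tilde{\mathbf g}_{a_K,J+1}$.
   Context: $j$ denotes the imaginary unit; $\angle s$ is the phase of a complex number $s$ and $(\mathbf v)_m$ the $m$-th entry of a vector. The BS array response (uniform linear array with antenna spacing $d_A$) is $\mathbf a_B(\vartheta)\in\mathbb C^N$ with $(\mathbf a_B(\vartheta))_n=e^{-j2\pi(n-1)d_A\sin\vartheta/\lambda}$. Each IRS is a uniform rectangular array with $M=M_1M_2$ elements and element spacing $d_I$, with array response $\mathbf a_I(\vartheta^a,\vartheta^e)\in\mathbb C^M$, $(\mathbf a_I(\vartheta^a,\vartheta^e))_m=e^{-j2\pi d_I(\lfloor\frac{m-1}{M_1}\rfloor\sin\vartheta^e\cos\vartheta^a+(m-1-\lfloor\frac{m-1}{M_1}\rfloor M_1)\cos\vartheta^e)/\lambda}$, where $\vartheta^a,\vartheta^e$ are azimuth/elevation angles of arrival or departure. The vectors $\tilde{\mathbf h}_{a_1,2}$ (arrival at IRS $a_1$ from the BS), $\tilde{\mathbf s}_{a_k,a_{k+1},1}$ (departure from IRS $a_k$ toward IRS $a_{k+1}$), $\tilde{\mathbf s}_{a_k,a_{k+1},2}$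 (arrival at IRS $a_{k+1}$ from IRS $a_k$), and $\tilde{\mathbf g}_{a_K,J+1}$ (departure from IRS $a_K$ toward the user) are each of the form $\mathbf a_I(\vartheta^a,\vartheta^e)$ for some (arbitrary) angles. *)

theory Defs
  imports Complex_Main
begin

text \<open>Vectors in C^n are modelled as functions nat => complex, with entries
indexed 0..n-1 (entry i corresponds to the paper's entry i+1).\<close>

definition aB :: "real \<Rightarrow> real \<Rightarrow> real \<Rightarrow> nat \<Rightarrow> complex" where
  "aB dA lam th n = cis (- 2 * pi * real n * dA * sin th / lam)"

text \<open>IRS array response (URA with M1 columns), 0-based index m (paper: m-1).\<close>
definition aI :: "nat \<Rightarrow> real \<Rightarrow> real \<Rightarrow> real \<Rightarrow> real \<Rightarrow> nat \<Rightarrow> complex" where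
  "aI M1 dI lam az el m =
     cis (- 2 * pi * dI * (real (m div M1) * sin el * cos az + real (m mod M1) * cos el) / lam)"

definition vnorm :: "nat \<Rightarrow> (nat \<Rightarrow> complex) \<Rightarrow> real" where
  "vnorm n v = sqrt (\<Sum>i<n. (cmod (v i))\<^sup>2)"

definition pgain :: "real \<Rightarrow> real \<Rightarrow> real \<Rightarrow> complex" where
  "pgain beta lam d = complex_of_real (sqrt beta / d) * cis (- 2 * pi * d / lam)"

definition rank1 :: "complex \<Rightarrow> (nat \<Rightarrow> complex) \<Rightarrow> (nat \<Rightarrow> complex) \<Rightarrow> nat \<Rightarrow> (nat \<Rightarrow> complex) \<Rightarrow> nat \<Rightarrow> complex" where
  "rank1 c u v n x = (\<lambda>m. c * u m * (\<Sum>i<n. cnj (v i) * x i))"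

definition phase :: "(nat \<Rightarrow> real) \<Rightarrow> (nat \<Rightarrow> complex) \<Rightarrow> nat \<Rightarrow> complex" where
  "phase th x = (\<lambda>m. cis (th m) * x m)"

text \<open>Signal arriving at IRS a_(k+1):
  stage 0 = H_{0,a_1} w ;  stage (k+1) = S_{a_(k+1),a_(k+2)} Phi_{a_(k+1)} (stage k).
  Here cS k, s2 k, s1 k describe the link a_k -> a_(k+1) (k >= 1) and th k the
  phase shifts of IRS a_k.\<close>
primrec stage :: "nat \<Rightarrow> (nat \<Rightarrow> complex) \<Rightarrow> (nat \<Rightarrow> nat \<Rightarrow> complex) \<Rightarrow> (nat \<Rightarrow> nat \<Rightarrow> complex)
    \<Rightarrow> (nat \<Rightarrow> nat \<Rightarrow> real) \<Rightarrow> (nat \<Rightarrow> complex) \<Rightarrow> nat \<Rightarrow> nat \<Rightarrow> complex" where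
  "stage M cS s2 s1 th v0 0 = v0"
| "stage M cS s2 s1 th v0 (Suc k) =
     rank1 (cS (Suc k)) (s2 (Suc k)) (s1 (Suc k)) M (phase (th (Suc k)) (stage M cS s2 s1 th v0 k))"

definition e2e :: "nat \<Rightarrow> nat \<Rightarrow> real \<Rightarrow> real \<Rightarrow> real \<Rightarrow> (nat \<Rightarrow> real) \<Rightarrow> real
    \<Rightarrow> (nat \<Rightarrow> complex) \<Rightarrow> (nat \<Rightarrow> complex) \<Rightarrow> (nat \<Rightarrow> nat \<Rightarrow> complex) \<Rightarrow> (nat \<Rightarrow> nat \<Rightarrow> complex)
    \<Rightarrow> (nat \<Rightarrow> complex) \<Rightarrow> nat \<Rightarrow> (nat \<Rightarrow> nat \<Rightarrow> real) \<Rightarrow> (nat \<Rightarrow> complex) \<Rightarrow> complex" where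
  "e2e N M beta lam d0 ds dJ h1 h2 s1 s2 g K th w =
     (let v0 = rank1 (pgain beta lam d0) h2 h1 N w;
          vK = stage M (\<lambda>k. pgain beta lam (ds k)) s2 s1 th v0 (K - 1)
      in pgain beta lam dJ * (\<Sum>m<M. cnj (g m) * phase (th K) vK m))"

end

theory Submission
  imports Defs "HOL-Analysis.L2_Norm"
begin


lemma inner_le:
  assumes "\<forall>m<M. cmod (y m) = 1" "\<forall>m<M. cmod (x m) = 1"
  shows "cmod (\<Sum>m<M. cnj (y m) * (cis (t m) * (c * x m))) \<le> real M * cmod c"
proof -
  have "cmod (\<Sum>m<M. cnj (y m) * (cis (t m) * (c * x m))) \<le> (\<Sum>m<M. cmod (cnj (y m) * (cis (t m) * (c * x m))))"
    by (rule norm_sum)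
  also have "\<dots> = (\<Sum>m<M. cmod c)"
    by (rule sum.cong) (use assms in \<open>auto simp: norm_mult\<close>)
  finally show ?thesis by simp
qed

lemma inner_eq:
  assumes "\<forall>m<M. cmod (y m) = 1" "\<forall>m<M. cmod (x m) = 1"
    and "\<forall>m<M. t m = Arg (y m) - Arg (x m)"
  shows "(\<Sum>m<M. cnj (y m) * (cis (t m) * (c * x m))) = of_nat M * c"
proof -
  have "cnj (y m) * (cis (t m) * (c * x m)) = c" if m: "m < M" for m
  proof -
    have y0: "y m \<noteq> 0" and x0: "x m \<noteq> 0" using assms m by auto
    have cy: "cis (Arg (y m)) = y m" using cis_Arg[OF y0] assms m by (simp add: sgn_div_norm)
    have cx: "cis (Arg (x m)) = x m" using cis_Arg[OF x0] assms m by (simp add: sgn_div_norm)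
    have "cis (t m) = y m / x m" using assms m cy cx by (simp add: cis_divide[symmetric])
    moreover have "cnj (y m) * y m = 1"
      using complex_norm_square[of "y m"] assms m by (simp add: mult.commute)
    ultimately show ?thesis using x0 by (simp add: field_simps)
  qed
  then have "(\<Sum>m<M. cnj (y m) * (cis (t m) * (c * x m))) = (\<Sum>m<M. c)"
    by (intro sum.cong) auto
  then show ?thesis by simp
qed

lemma stage_form:
  assumes s1u: "\<forall>k m. cmod (s1 k m) = 1" and s2u: "\<forall>k m. cmod (s2 k m) = 1"
    and uu: "\<forall>m. cmod (u m) = 1"
  shows "\<exists>c. stage M cS s2 s1 th (\<lambda>m. a * u m) k = (\<lambda>m. c * (if k = 0 then u m else s2 k m))
     \<and> cmod c \<le> cmod a * real M ^ k * (\<Prod>i\<in>{1..k}. cmod (cS i))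
     \<and> ((\<forall>j\<in>{1..k}. \<forall>m<M. th j m = Arg (s1 j m) - Arg (if j - 1 = 0 then u m else s2 (j - 1) m))
          \<longrightarrow> cmod c = cmod a * real M ^ k * (\<Prod>i\<in>{1..k}. cmod (cS i)))"
proof (induction k)
  case 0
  show ?case by (rule exI[of _ a]) auto
next
  case (Suc k)
  then obtain c where c: "stage M cS s2 s1 th (\<lambda>m. a * u m) k = (\<lambda>m. c * (if k = 0 then u m else s2 k m))"
    and cle: "cmod c \<le> cmod a * real M ^ k * (\<Prod>i\<in>{1..k}. cmod (cS i))"
    and ceq: "(\<forall>j\<in>{1..k}. \<forall>m<M. th j m = Arg (s1 j m) - Arg (if j - 1 = 0 then u m else s2 (j - 1) m))
          \<longrightarrow> cmod c = cmod a * real M ^ k * (\<Prod>i\<in>{1..k}. cmod (cS i))" by blast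
  define X where "X = (\<lambda>m. if k = 0 then u m else s2 k m)"
  define S where "S = (\<Sum>m<M. cnj (s1 (Suc k) m) * (cis (th (Suc k) m) * (c * X m)))"
  have Xu: "\<forall>m<M. cmod (X m) = 1" using uu s2u by (auto simp: X_def)
  have y1: "\<forall>m<M. cmod (s1 (Suc k) m) = 1" using s1u by auto
  have st: "stage M cS s2 s1 th (\<lambda>m. a * u m) (Suc k) = (\<lambda>m. (cS (Suc k) * S) * s2 (Suc k) m)"
    by (simp add: c rank1_def phase_def S_def X_def mult_ac)
  have prod: "(\<Prod>i\<in>{1..Suc k}. cmod (cS i)) = (\<Prod>i\<in>{1..k}. cmod (cS i)) * cmod (cS (Suc k))"
    by simp
  have Sle: "cmod S \<le> real M * cmod c" unfolding S_def by (rule inner_le[OF y1 Xu])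
  show ?case
  proof (intro exI conjI impI)
    show "stage M cS s2 s1 th (\<lambda>m. a * u m) (Suc k) = (\<lambda>m. (cS (Suc k) * S) * (if Suc k = 0 then u m else s2 (Suc k) m))"
      using st by simp
    have "cmod (cS (Suc k) * S) = cmod (cS (Suc k)) * cmod S" by (simp add: norm_mult)
    also have "\<dots> \<le> cmod (cS (Suc k)) * (real M * (cmod a * real M ^ k * (\<Prod>i\<in>{1..k}. cmod (cS i))))"
      by (intro mult_left_mono order_trans[OF Sle] mult_left_mono cle) auto
    finally show "cmod (cS (Suc k) * S) \<le> cmod a * real M ^ Suc k * (\<Prod>i\<in>{1..Suc k}. cmod (cS i))"
      by (simp add: prod mult_ac)
  next
    assume al: "\<forall>j\<in>{1..Suc k}. \<forall>m<M. th j m = Arg (s1 j m) - Arg (if j - 1 = 0 then u m else s2 (j - 1) m)"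
    then have "cmod c = cmod a * real M ^ k * (\<Prod>i\<in>{1..k}. cmod (cS i))" using ceq by auto
    moreover have "S = of_nat M * c" unfolding S_def
      by (rule inner_eq[OF y1 Xu]) (use al in \<open>auto simp: X_def\<close>)
    ultimately show "cmod (cS (Suc k) * S) = cmod a * real M ^ Suc k * (\<Prod>i\<in>{1..Suc k}. cmod (cS i))"
      by (simp add: prod norm_mult mult_ac)
  qed
qed


lemma aI_unit: "cmod (aI M1 dI lam az el m) = 1" by (simp add: aI_def)
lemma aB_unit: "cmod (aB dA lam th n) = 1" by (simp add: aB_def)
lemma pgain_norm: "d > 0 \<Longrightarrow> beta \<ge> 0 \<Longrightarrow> cmod (pgain beta lam d) = sqrt beta / d"
  by (simp add: pgain_def norm_mult norm_divide)

lemma ip_le: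
  assumes "\<forall>i. cmod (h i) = 1" "vnorm N w = 1"
  shows "cmod (\<Sum>i<N. cnj (h i) * w i) \<le> sqrt (real N)"
proof -
  have "cmod (\<Sum>i<N. cnj (h i) * w i) \<le> (\<Sum>i<N. cmod (cnj (h i) * w i))" by (rule norm_sum)
  also have "\<dots> = (\<Sum>i<N. \<bar>(\<lambda>_. 1::real) i\<bar> * \<bar>(\<lambda>i. cmod (w i)) i\<bar>)"
    using assms(1) by (simp add: norm_mult)
  also have "\<dots> \<le> L2_set (\<lambda>_. 1::real) {..<N} * L2_set (\<lambda>i. cmod (w i)) {..<N}"
    by (rule L2_set_mult_ineq)
  also have "L2_set (\<lambda>i. cmod (w i)) {..<N} = 1" using assms(2) by (simp add: L2_set_def vnorm_def)
  also have "L2_set (\<lambda>_. 1::real) {..<N} = sqrt (real N)" by (simp add: L2_set_def)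
  finally show ?thesis by simp
qed

theorem mainTheorem1:
  fixes N M1 M2 K :: nat
    and lam beta d0 dJ dA dI th0 hA hE gA gE :: real
    and ds s1A s1E s2A s2E :: "nat \<Rightarrow> real"
    and M :: nat and h1 h2 g :: "nat \<Rightarrow> complex" and s1 s2 :: "nat \<Rightarrow> nat \<Rightarrow> complex"
    and D :: real and wopt :: "nat \<Rightarrow> complex" and thopt :: "nat \<Rightarrow> nat \<Rightarrow> real"
    and X :: real
  assumes "N \<ge> 1" and "M1 \<ge> 1" and "M2 \<ge> 1" and "K \<ge> 1"
    and "lam > 0" and "0 < beta" and "beta < 1"
    and "d0 > 0" and "dJ > 0" and "\<forall>k\<in>{1..K-1}. ds k > 0"
  defines "M \<equiv> M1 * M2"
    and "h1 \<equiv> aB dA lam th0"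
    and "h2 \<equiv> aI M1 dI lam hA hE"
    and "s1 \<equiv> (\<lambda>k. aI M1 dI lam (s1A k) (s1E k))"
    and "s2 \<equiv> (\<lambda>k. aI M1 dI lam (s2A k) (s2E k))"
    and "g \<equiv> aI M1 dI lam gA gE"
    and "X \<equiv> real M ^ (2 * K) * real N * beta ^ (K + 1)
              / (d0\<^sup>2 * dJ\<^sup>2 * (\<Prod>k\<in>{1..K-1}. (ds k)\<^sup>2))"
    and "D \<equiv> d0 + dJ + (\<Sum>k\<in>{1..K-1}. ds k)"
    and "wopt \<equiv> (\<lambda>n. cis (2 * pi * D / lam) * h1 n / complex_of_real (vnorm N h1))"
    and "thopt \<equiv> (\<lambda>k m. Arg (if k < K then s1 k m else g m)
                        - Arg (if k = 1 then h2 m else s2 (k - 1) m))"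
  shows "(\<forall>th w. vnorm N w = 1 \<longrightarrow>
            (cmod (e2e N M beta lam d0 ds dJ h1 h2 s1 s2 g K th w))\<^sup>2 \<le> X)
       \<and> vnorm N wopt = 1
       \<and> (cmod (e2e N M beta lam d0 ds dJ h1 h2 s1 s2 g K thopt wopt))\<^sup>2 = X"
proof -
  have Kpos: "K \<ge> 1" using assms(4) .
  have b0: "beta \<ge> 0" using assms(6) by simp
  have s1u: "\<forall>k m. cmod (s1 k m) = 1" by (simp add: s1_def aI_unit)
  have s2u: "\<forall>k m. cmod (s2 k m) = 1" by (simp add: s2_def aI_unit)
  have h2u: "\<forall>m. cmod (h2 m) = 1" by (simp add: h2_def aI_unit)
  have gu: "\<forall>m. cmod (g m) = 1" by (simp add: g_def aI_unit)
  have h1u: "\<forall>i. cmod (h1 i) = 1" by (simp add: h1_def aB_unit)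
  define P where "P = (\<Prod>i\<in>{1..K-1}. sqrt beta / ds i)"
  have Pcm: "(\<Prod>i\<in>{1..K-1}. cmod (pgain beta lam (ds i))) = P"
    unfolding P_def by (rule prod.cong) (use assms(10) b0 in \<open>auto simp: pgain_norm\<close>)
  have P0: "P \<ge> 0" unfolding P_def using assms(10) b0 by (auto intro!: prod_nonneg)
  define B where "B = sqrt beta / dJ * (sqrt beta / d0) * sqrt (real N) * real M ^ K * P"
  have P2: "P\<^sup>2 = beta ^ (K - 1) / (\<Prod>k\<in>{1..K-1}. (ds k)\<^sup>2)"
  proof -
    have "P\<^sup>2 = (\<Prod>i\<in>{1..K-1}. (sqrt beta / ds i)\<^sup>2)" unfolding P_def by (simp add: prod_power_distrib)
    also have "\<dots> = (\<Prod>i\<in>{1..K-1}. beta / (ds i)\<^sup>2)"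
      by (rule prod.cong) (use b0 in \<open>auto simp: power_divide\<close>)
    also have "\<dots> = beta ^ (K - 1) / (\<Prod>k\<in>{1..K-1}. (ds k)\<^sup>2)"
      by (simp add: prod_dividef)
    finally show ?thesis .
  qed
  have XB: "X = B\<^sup>2"
  proof -
    have "B\<^sup>2 = beta / dJ\<^sup>2 * (beta / d0\<^sup>2) * real N * real M ^ (2 * K) * P\<^sup>2"
    proof -
      have "B\<^sup>2 = (sqrt beta)\<^sup>2 / dJ\<^sup>2 * ((sqrt beta)\<^sup>2 / d0\<^sup>2) * (sqrt (real N))\<^sup>2 * (real M ^ K)\<^sup>2 * P\<^sup>2"
        unfolding B_def by (simp only: power_mult_distrib power_divide)
      also have "(real M ^ K)\<^sup>2 = real M ^ (2 * K)" by (simp add: power_mult[symmetric] mult.commute)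
      finally show ?thesis using b0 by simp
    qed
    also have "\<dots> = real M ^ (2 * K) * real N * (beta * beta * beta ^ (K - 1))
              / (d0\<^sup>2 * dJ\<^sup>2 * (\<Prod>k\<in>{1..K-1}. (ds k)\<^sup>2))"
    proof -
      have "(\<Prod>k\<in>{1..K-1}. (ds k)\<^sup>2) \<noteq> 0" using assms(10) by (simp add: less_imp_neq[symmetric] del: One_nat_def)
      then show ?thesis using assms(8,9) by (subst P2) (simp add: field_simps)
    qed
    also have "beta * beta * beta ^ (K - 1) = beta ^ (K + 1)"
      using Kpos by (metis Suc_diff_le diff_Suc_1 add.commute plus_1_eq_Suc power_Suc mult.assoc)
    finally show ?thesis unfolding X_def by simp
  qed
  have B0: "B \<ge> 0" unfolding B_def using P0 assms b0 by simp
  have gen: "cmod (e2e N M beta lam d0 ds dJ h1 h2 s1 s2 g K th w) \<le>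
      sqrt beta / dJ * real M * (sqrt beta / d0 * cmod (\<Sum>i<N. cnj (h1 i) * w i) * real M ^ (K - 1) * P)
    \<and> ((\<forall>j\<in>{1..K}. \<forall>m<M. th j m = Arg (if j < K then s1 j m else g m) - Arg (if j = 1 then h2 m else s2 (j - 1) m))
      \<longrightarrow> cmod (e2e N M beta lam d0 ds dJ h1 h2 s1 s2 g K th w) =
      sqrt beta / dJ * real M * (sqrt beta / d0 * cmod (\<Sum>i<N. cnj (h1 i) * w i) * real M ^ (K - 1) * P))"
    for th w
  proof -
    define a where "a = pgain beta lam d0 * (\<Sum>i<N. cnj (h1 i) * w i)"
    have v0: "rank1 (pgain beta lam d0) h2 h1 N w = (\<lambda>m. a * h2 m)"
      by (simp add: rank1_def a_def mult_ac)
    obtain c where c: "stage M (\<lambda>k. pgain beta lam (ds k)) s2 s1 th (\<lambda>m. a * h2 m) (K - 1)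
        = (\<lambda>m. c * (if K - 1 = 0 then h2 m else s2 (K - 1) m))"
      and cle: "cmod c \<le> cmod a * real M ^ (K - 1) * (\<Prod>i\<in>{1..K-1}. cmod (pgain beta lam (ds i)))"
      and ceq: "(\<forall>j\<in>{1..K-1}. \<forall>m<M. th j m = Arg (s1 j m) - Arg (if j - 1 = 0 then h2 m else s2 (j - 1) m))
          \<longrightarrow> cmod c = cmod a * real M ^ (K - 1) * (\<Prod>i\<in>{1..K-1}. cmod (pgain beta lam (ds i)))"
      using stage_form[OF s1u s2u h2u, of M "\<lambda>k. pgain beta lam (ds k)" th a "K - 1"] by blast
    define Xv where "Xv = (\<lambda>m. if K - 1 = 0 then h2 m else s2 (K - 1) m)"
    have Xu: "\<forall>m<M. cmod (Xv m) = 1" using h2u s2u by (auto simp: Xv_def)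
    have gM: "\<forall>m<M. cmod (g m) = 1" using gu by auto
    define S where "S = (\<Sum>m<M. cnj (g m) * (cis (th K m) * (c * Xv m)))"
    have E: "e2e N M beta lam d0 ds dJ h1 h2 s1 s2 g K th w = pgain beta lam dJ * S"
      unfolding e2e_def Let_def v0 c S_def Xv_def phase_def by simp
    have na: "cmod a = sqrt beta / d0 * cmod (\<Sum>i<N. cnj (h1 i) * w i)"
      unfolding a_def using assms(8) b0 by (simp add: norm_mult pgain_norm)
    have ndJ: "cmod (pgain beta lam dJ) = sqrt beta / dJ" using assms(9) b0 by (simp add: pgain_norm)
    have Sle: "cmod S \<le> real M * cmod c" unfolding S_def by (rule inner_le[OF gM Xu])
    show ?thesis
    proof
      have "cmod (e2e N M beta lam d0 ds dJ h1 h2 s1 s2 g K th w) = sqrt beta / dJ * cmod S"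
        by (simp add: E norm_mult ndJ)
      also have "\<dots> \<le> sqrt beta / dJ * (real M * cmod c)"
        using Sle assms(9) b0 by (intro mult_left_mono) auto
      also have "\<dots> \<le> sqrt beta / dJ * (real M * (cmod a * real M ^ (K - 1) * P))"
        using cle Pcm assms(9) b0 by (intro mult_left_mono) auto
      finally show "cmod (e2e N M beta lam d0 ds dJ h1 h2 s1 s2 g K th w) \<le>
        sqrt beta / dJ * real M * (sqrt beta / d0 * cmod (\<Sum>i<N. cnj (h1 i) * w i) * real M ^ (K - 1) * P)"
        by (simp add: na mult_ac)
    next
      show "(\<forall>j\<in>{1..K}. \<forall>m<M. th j m = Arg (if j < K then s1 j m else g m) - Arg (if j = 1 then h2 m else s2 (j - 1) m))
      \<longrightarrow> cmod (e2e N M beta lam d0 ds dJ h1 h2 s1 s2 g K th w) =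
      sqrt beta / dJ * real M * (sqrt beta / d0 * cmod (\<Sum>i<N. cnj (h1 i) * w i) * real M ^ (K - 1) * P)"
      proof
        assume al: "\<forall>j\<in>{1..K}. \<forall>m<M. th j m = Arg (if j < K then s1 j m else g m) - Arg (if j = 1 then h2 m else s2 (j - 1) m)"
        have "\<forall>j\<in>{1..K-1}. \<forall>m<M. th j m = Arg (s1 j m) - Arg (if j - 1 = 0 then h2 m else s2 (j - 1) m)"
        proof (intro ballI allI impI)
          fix j m assume j: "j \<in> {1..K-1}" and m: "m < M"
          then have "j \<in> {1..K}" "j < K" "(j - 1 = 0) = (j = 1)" by auto
          then show "th j m = Arg (s1 j m) - Arg (if j - 1 = 0 then h2 m else s2 (j - 1) m)"
            using al m by auto
        qed
        then have cE: "cmod c = cmod a * real M ^ (K - 1) * P" using ceq Pcm by simp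
        have "S = of_nat M * c" unfolding S_def
        proof (rule inner_eq[OF gM Xu], intro allI impI)
          fix m assume m: "m < M"
          have "K \<in> {1..K}" using Kpos by auto
          then have "th K m = Arg (g m) - Arg (if K = 1 then h2 m else s2 (K - 1) m)" using al m by auto
          moreover have "(K - 1 = 0) = (K = 1)" using Kpos by auto
          ultimately show "th K m = Arg (g m) - Arg (Xv m)" by (simp add: Xv_def)
        qed
        then show "cmod (e2e N M beta lam d0 ds dJ h1 h2 s1 s2 g K th w) =
          sqrt beta / dJ * real M * (sqrt beta / d0 * cmod (\<Sum>i<N. cnj (h1 i) * w i) * real M ^ (K - 1) * P)"
          by (simp add: E norm_mult ndJ cE na mult_ac)
      qed
    qed
  qed
  have MK: "real M * real M ^ (K - 1) = real M ^ K"
    using Kpos by (metis Suc_diff_le diff_Suc_1 power_Suc)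
  have Bform: "sqrt beta / dJ * real M * (sqrt beta / d0 * r * real M ^ (K - 1) * P) = B * r / sqrt (real N)" for r
  proof -
    have "sqrt (real N) > 0" using assms(1) by simp
    then show ?thesis unfolding B_def using MK[symmetric] by (simp add: field_simps)
  qed
  have vh1: "vnorm N h1 = sqrt (real N)" using h1u by (simp add: vnorm_def)
  have sN: "sqrt (real N) > 0" using assms(1) by simp
  have part1: "\<forall>th w. vnorm N w = 1 \<longrightarrow>
            (cmod (e2e N M beta lam d0 ds dJ h1 h2 s1 s2 g K th w))\<^sup>2 \<le> X"
  proof (intro allI impI)
    fix th w assume w: "vnorm N w = 1"
    have ip: "cmod (\<Sum>i<N. cnj (h1 i) * w i) \<le> sqrt (real N)" by (rule ip_le[OF h1u w])
    have "cmod (e2e N M beta lam d0 ds dJ h1 h2 s1 s2 g K th w) \<le> B * cmod (\<Sum>i<N. cnj (h1 i) * w i) / sqrt (real N)"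
      using gen[of th w] Bform by simp
    also have "\<dots> \<le> B * sqrt (real N) / sqrt (real N)"
      using ip B0 sN by (intro divide_right_mono mult_left_mono) auto
    also have "\<dots> = B" using sN by simp
    finally show "(cmod (e2e N M beta lam d0 ds dJ h1 h2 s1 s2 g K th w))\<^sup>2 \<le> X"
      unfolding XB by (intro power_mono) auto
  qed
  have wopt_n: "cmod (wopt n) = 1 / sqrt (real N)" for n
    unfolding wopt_def vh1 using h1u sN by (simp add: norm_mult norm_divide)
  have part2: "vnorm N wopt = 1"
    unfolding vnorm_def wopt_n using assms(1) by (simp add: power_divide)
  have ipopt: "cmod (\<Sum>i<N. cnj (h1 i) * wopt i) = sqrt (real N)"
  proof -
    have "cnj (h1 i) * wopt i = cis (2 * pi * D / lam) / complex_of_real (sqrt (real N))" for i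
    proof -
      have "cnj (h1 i) * h1 i = 1" using complex_norm_square[of "h1 i"] h1u by (simp add: mult.commute)
      then show ?thesis unfolding wopt_def vh1 by (simp add: field_simps)
    qed
    then have "(\<Sum>i<N. cnj (h1 i) * wopt i) = of_nat N * (cis (2 * pi * D / lam) / complex_of_real (sqrt (real N)))"
      by simp
    then have "cmod (\<Sum>i<N. cnj (h1 i) * wopt i) = real N / sqrt (real N)"
      using sN by (simp add: norm_mult norm_divide)
    also have "\<dots> = sqrt (real N)" using sN by (metis real_div_sqrt of_nat_0_le_iff)
    finally show ?thesis .
  qed
  have al: "\<forall>j\<in>{1..K}. \<forall>m<M. thopt j m = Arg (if j < K then s1 j m else g m) - Arg (if j = 1 then h2 m else s2 (j - 1) m)"
    unfolding thopt_def by simp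
  have "cmod (e2e N M beta lam d0 ds dJ h1 h2 s1 s2 g K thopt wopt) = B"
    using gen[of thopt wopt] al Bform ipopt sN by simp
  then have part3: "(cmod (e2e N M beta lam d0 ds dJ h1 h2 s1 s2 g K thopt wopt))\<^sup>2 = X"
    using XB by simp
  show ?thesis using part1 part2 part3 by blast
qed

end
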